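(* Consider one step $i$ of a memory-augmented recurrent neural network with vanilla (linear-activation) transition, in which the previous hidden state $\bm h_{i-1}$ and the current input $\bm x_i$ are held fixed. The hidden state is $\bm h_i = W \bm h_{i-1} + U \bm x_i + W_{(c)} \bm c + \bm b \in \mathbb{R}^D$, where $\bm c \in \mathbb{R}^d$ is the memory content retrieved from a key-value memory bank with $N$ slots: $\widetilde\alpha_j = \exp\{\bm h_{i-1}^\top \bm m_j^{(\mathrm{key})}\}$, $\alpha_j = \widetilde\alpha_j / \sum_{j'=1}^N \widetilde\alpha_{j'}$, and $\bm c = \sum_{j=1}^N \alpha_j \bm m_j^{(\mathrm{val})}$, with $\bm m_j^{(\mathrm{val})}\in\mathbb{R}^d$. Compare two ways of increasing model capacity: (i) Memory expansion: $M$ new slots $j=N+1,\dots,N+M$ (with keys and values $\bm m_j^{(\mathrm{val})}\in\mathbb{R}^d$) are added, the attention becomes $\alpha'_j = \widetilde\alpha_j / \sum_{j'=1}^{N+M}\widetilde\alpha_{j'}$ for $1\le j\le N+M$, the content becomes $\bm c' = \sum_{j=1}^{N+M}\alpha'_j \bm m_j^{(\mathrm{val})}$, and all other quantities are unchanged, giving $\bm h_i^{(m)} = W \bm h_{i-1} + U \bm x_i + W_{(c)} \bm c' + \bm b$. (ii) Hidden-state expansion: $d$ new hidden units are added, with values $\widetilde{\bm h}_{i-1}\in\mathbb{R}^d$ at step $i-1$, connected to the original $D$ dimensions by new weights $\widetilde W\in\mathbb{R}^{D\times d}$; the original $D$ dimensions of the new hidden state at step $i$ are $\bm h_i^{(s)}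 = \bm h_i + \widetilde W \widetilde{\bm h}_{i-1}$. Suppose that, for the given data point, the unnormalized attention weights satisfy $\sum_{j=N+1}^{N+M}\widetilde\alpha_j \le \sum_{j=1}^{N}\widetilde\alpha_j$. Then $$\mathbb{E}\left[\|\bm h_i^{(m)}-\bm h_i\|^2\right] \le \mathbb{E}\left[\|\bm h_i^{(s)}-\bm h_i\|^2\right],$$ where the expectation is computed by assuming the weights and hidden states (the entries of $\widetilde W$, $\widetilde{\bm h}_{i-1}$, $W_{(c)}$, and all memory value vectors $\bm m_j^{(\mathrm{val})}$, $1\le j\le N+M$) are i.i.d. from a zero-mean Gaussian distribution with variance $\sigma^2$ (independent of the attention weights).
   Context: This is a simplified model of a recurrent neural network augmented with a key-value memory bank retrieved by softmax attention, used to compare the perturbation of the original $D$ hidden dimensions caused by adding memory slots versus adding hidden units. The attention weights $\widetilde\alpha_j$ for a given data point are treated as fixed (they depend on the keys and on $\bm h_{i-1}$, which is fixed), while the randomness is over the weights, the newly added hidden units, and the memory value entries, all i.i.d. zero-mean Gaussian with variance $\sigma^2$. *)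

theory Defs
  imports "HOL-Probability.Probability"
begin

text \<open>Vectors in R^n are functions nat => real read on indices < n; matrices are
  nat => nat => real read on indices (row < rows, col < cols). Indices are 0-based:
  original memory slots are j < N, new slots are N <= j < N + M.\<close>

definition matvec :: "nat \<Rightarrow> (nat \<Rightarrow> nat \<Rightarrow> real) \<Rightarrow> (nat \<Rightarrow> real) \<Rightarrow> nat \<Rightarrow> real" where
  "matvec ncols A v = (\<lambda>i. \<Sum>k<ncols. A i k * v k)"

definition sqnorm :: "nat \<Rightarrow> (nat \<Rightarrow> real) \<Rightarrow> real" where
  "sqnorm n v = (\<Sum>i<n. (v i)\<^sup>2)"

definition attn_tilde :: "nat \<Rightarrow> (nat \<Rightarrow> real) \<Rightarrow> (nat \<Rightarrow> nat \<Rightarrow> real) \<Rightarrow> nat \<Rightarrow> real" where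
  "attn_tilde D hprev key j = exp (\<Sum>k<D. hprev k * key j k)"

definition content :: "nat \<Rightarrow> (nat \<Rightarrow> real) \<Rightarrow> (nat \<Rightarrow> nat \<Rightarrow> real) \<Rightarrow> nat \<Rightarrow> real" where
  "content K atil mval = (\<lambda>k. \<Sum>j<K. (atil j / (\<Sum>j'<K. atil j')) * mval j k)"

definition hidden :: "nat \<Rightarrow> nat \<Rightarrow> nat \<Rightarrow> (nat \<Rightarrow> nat \<Rightarrow> real) \<Rightarrow> (nat \<Rightarrow> nat \<Rightarrow> real)
    \<Rightarrow> (nat \<Rightarrow> nat \<Rightarrow> real) \<Rightarrow> (nat \<Rightarrow> real) \<Rightarrow> (nat \<Rightarrow> real) \<Rightarrow> (nat \<Rightarrow> real)
    \<Rightarrow> (nat \<Rightarrow> real) \<Rightarrow> nat \<Rightarrow> real" where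
  "hidden D p d W U Wc b hprev x c =
     (\<lambda>i. matvec D W hprev i + matvec p U x i + matvec d Wc c i + b i)"

text \<open>The random quantities: entries of W_(c) (D x d), memory values m_j^val (j < K, d entries),
  entries of W-tilde (D x d) and of h-tilde_{i-1} (d entries).\<close>
datatype rvar = RWc nat nat | RMv nat nat | RWt nat nat | RHt nat

definition rvars :: "nat \<Rightarrow> nat \<Rightarrow> nat \<Rightarrow> rvar set" where
  "rvars D d K =
     {RWc a b | a b. a < D \<and> b < d} \<union> {RMv j b | j b. j < K \<and> b < d}
     \<union> {RWt a b | a b. a < D \<and> b < d} \<union> {RHt b | b. b < d}"

definition gauss_space :: "real \<Rightarrow> rvar set \<Rightarrow> (rvar \<Rightarrow> real) measure" where
  "gauss_space \<sigma> I = PiM I (\<lambda>_. density lborel (normal_density 0 \<sigma>))"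

end

theory Submission
  imports Defs
begin

abbreviation NS :: "real \<Rightarrow> real measure" where
  "NS \<sigma> \<equiv> density lborel (normal_density 0 \<sigma>)"

lemma NS_integrable:
  assumes "\<sigma> > 0" shows "integrable (NS \<sigma>) (\<lambda>x. x ^ k)"
  using integrable_normal_moment[OF assms, of 0 k]
  by (subst integrable_density) auto

lemma NS_integral:
  assumes "\<sigma> > 0" shows "(\<integral>x. x ^ k \<partial>NS \<sigma>) = (\<integral>x. normal_density 0 \<sigma> x * x ^ k \<partial>lborel)"
  by (subst integral_density) auto

lemma NS_m0: assumes "\<sigma> > 0" shows "(\<integral>x. x ^ 0 \<partial>NS \<sigma>) = 1"
  using NS_integral[OF assms, of 0] integral_normal_density[OF assms, of 0] by simp

lemma NS_m1: assumes "\<sigma> > 0" shows "(\<integral>x. x ^ 1 \<partial>NS \<sigma>) = 0"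
  using NS_integral[OF assms, of 1] integral_normal_moment_odd[OF assms, of 0 0] by simp

lemma NS_m2: assumes "\<sigma> > 0" shows "(\<integral>x. x ^ 2 \<partial>NS \<sigma>) = \<sigma>\<^sup>2"
  using NS_integral[OF assms, of 2] integral_normal_moment_even[OF assms, of 0 1] assms
  by (simp add: fact_numeral)

lemma NS_prob: assumes "\<sigma> > 0" shows "prob_space (NS \<sigma>)"
  using prob_space_normal_density[OF assms] .


lemma prod_pow_ind:
  assumes "finite I" "u \<in> I"
  shows "(\<Prod>i\<in>I. (f i :: real) ^ (if i = u then 1 else 0)) = f u"
proof -
  have "(\<Prod>i\<in>I. f i ^ (if i = u then 1 else 0)) = (\<Prod>i\<in>I. if i = u then f i else 1)"
    by (intro prod.cong) auto
  also have "\<dots> = f u" using assms by (simp add: prod.delta)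
  finally show ?thesis .
qed

lemma moment4:
  fixes I :: "'i set"
  assumes s: "\<sigma> > 0" and fin: "finite I" and mem: "u \<in> I" "v \<in> I" "w \<in> I" "z \<in> I"
    and dis: "u \<noteq> w" "u \<noteq> z" "v \<noteq> w" "v \<noteq> z"
  shows "integrable (PiM I (\<lambda>_. NS \<sigma>)) (\<lambda>\<omega>. \<omega> u * \<omega> v * \<omega> w * \<omega> z)"
    and "(\<integral>\<omega>. \<omega> u * \<omega> v * \<omega> w * \<omega> z \<partial>PiM I (\<lambda>_. NS \<sigma>))
         = (if u = v then \<sigma>\<^sup>2 else 0) * (if w = z then \<sigma>\<^sup>2 else 0)"
proof -
  interpret product_prob_space "\<lambda>_::'i. NS \<sigma>"
    by (simp add: product_prob_space_def product_prob_space_axioms_def product_sigma_finite_def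
        NS_prob[OF s] prob_space_imp_sigma_finite)
  define n where "n i = (if i = u then 1 else 0) + (if i = v then 1 else 0)
     + (if i = w then 1 else 0) + ((if i = z then 1 else 0)::nat)" for i
  have eq: "(\<Prod>i\<in>I. \<omega> i ^ n i) = \<omega> u * \<omega> v * \<omega> w * \<omega> z" for \<omega> :: "'i \<Rightarrow> real"
    unfolding n_def power_add prod.distrib using fin mem by (simp add: prod_pow_ind)
  have int: "\<And>i. i \<in> I \<Longrightarrow> integrable (NS \<sigma>) (\<lambda>x. x ^ n i)"
    using NS_integrable[OF s] by blast
  show "integrable (PiM I (\<lambda>_. NS \<sigma>)) (\<lambda>\<omega>. \<omega> u * \<omega> v * \<omega> w * \<omega> z)"
    using product_integrable_prod[of I "\<lambda>i x. x ^ n i", OF fin int] by (simp add: eq)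
  have "(\<integral>\<omega>. \<omega> u * \<omega> v * \<omega> w * \<omega> z \<partial>PiM I (\<lambda>_. NS \<sigma>))
      = (\<Prod>i\<in>I. (\<integral>x. x ^ n i \<partial>NS \<sigma>))"
    using product_integral_prod[of I "\<lambda>i x. x ^ n i", OF fin int] by (simp add: eq)
  also have "\<dots> = (if u = v then \<sigma>\<^sup>2 else 0) * (if w = z then \<sigma>\<^sup>2 else 0)"
  proof (cases "u = v \<and> w = z")
    case True
    have nu: "n u = 2" "n w = 2" using True dis by (auto simp: n_def)
    have no: "i \<in> I - {u} - {w} \<Longrightarrow> n i = 0" for i using True by (auto simp: n_def)
    have "(\<Prod>i\<in>I. (\<integral>x. x ^ n i \<partial>NS \<sigma>)) = (\<integral>x. x ^ n u \<partial>NS \<sigma>) *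
       ((\<integral>x. x ^ n w \<partial>NS \<sigma>) * (\<Prod>i\<in>I - {u} - {w}. (\<integral>x. x ^ n i \<partial>NS \<sigma>)))"
    proof -
      have "w \<in> I - {u}" using mem dis by auto
      then show ?thesis
        by (subst prod.remove[OF fin mem(1)], subst prod.remove[of "I - {u}" w]) (use fin in auto)
    qed
    also have "(\<Prod>i\<in>I - {u} - {w}. (\<integral>x. x ^ n i \<partial>NS \<sigma>)) = 1"
      using no NS_m0[OF s] by (intro prod.neutral) auto
    finally show ?thesis using True nu NS_m2[OF s] by simp
  next
    case False
    then obtain y where y: "y \<in> I" "n y = 1" "\<not> (u = v \<and> w = z)"
      using dis mem by (auto simp: n_def)
    then have "(\<Prod>i\<in>I. (\<integral>x. x ^ n i \<partial>NS \<sigma>)) = 0"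
      using fin NS_m1[OF s] by (intro prod_zero bexI[of _ y]) auto
    then show ?thesis using False by auto
  qed
  finally show "(\<integral>\<omega>. \<omega> u * \<omega> v * \<omega> w * \<omega> z \<partial>PiM I (\<lambda>_. NS \<sigma>))
         = (if u = v then \<sigma>\<^sup>2 else 0) * (if w = z then \<sigma>\<^sup>2 else 0)" .
qed


lemma quad_form:
  fixes I :: "'i set" and A :: "'a set" and p q :: "'a \<Rightarrow> 'i" and c :: "'a \<Rightarrow> real"
  assumes s: "\<sigma> > 0" and fin: "finite I" and finA: "finite A"
    and mem: "\<And>a. a \<in> A \<Longrightarrow> p a \<in> I" "\<And>a. a \<in> A \<Longrightarrow> q a \<in> I"
    and dis: "\<And>a b. a \<in> A \<Longrightarrow> b \<in> A \<Longrightarrow> p a \<noteq> q b"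
    and inj: "inj_on (\<lambda>a. (p a, q a)) A"
  shows "integrable (PiM I (\<lambda>_. NS \<sigma>)) (\<lambda>\<omega>. (\<Sum>a\<in>A. c a * (\<omega> (p a) * \<omega> (q a)))\<^sup>2)"
    and "(\<integral>\<omega>. (\<Sum>a\<in>A. c a * (\<omega> (p a) * \<omega> (q a)))\<^sup>2 \<partial>PiM I (\<lambda>_. NS \<sigma>))
         = \<sigma>^4 * (\<Sum>a\<in>A. (c a)\<^sup>2)"
proof -
  have exp: "(\<Sum>a\<in>A. c a * (\<omega> (p a) * \<omega> (q a)))\<^sup>2 =
     (\<Sum>a\<in>A. \<Sum>b\<in>A. c a * c b * (\<omega> (p a) * \<omega> (p b) * \<omega> (q a) * \<omega> (q b)))" for \<omega> :: "'i \<Rightarrow> real"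
    by (simp add: power2_eq_square sum_product algebra_simps)
  have mi: "integrable (PiM I (\<lambda>_. NS \<sigma>)) (\<lambda>\<omega>. \<omega> (p a) * \<omega> (p b) * \<omega> (q a) * \<omega> (q b))"
   and mv: "(\<integral>\<omega>. \<omega> (p a) * \<omega> (p b) * \<omega> (q a) * \<omega> (q b) \<partial>PiM I (\<lambda>_. NS \<sigma>))
          = (if a = b then \<sigma>^4 else 0)"
    if "a \<in> A" "b \<in> A" for a b
  proof -
    note m = moment4[OF s fin mem(1)[OF that(1)] mem(1)[OF that(2)] mem(2)[OF that(1)] mem(2)[OF that(2)]
        dis[OF that(1,1)] dis[OF that(1,2)] dis[OF that(2,1)] dis[OF that(2,2)]]
    show "integrable (PiM I (\<lambda>_. NS \<sigma>)) (\<lambda>\<omega>. \<omega> (p a) * \<omega> (p b) * \<omega> (q a) * \<omega> (q b))"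
      using m(1) .
    have "(p a = p b \<and> q a = q b) = (a = b)" using inj that unfolding inj_on_def by auto
    then show "(\<integral>\<omega>. \<omega> (p a) * \<omega> (p b) * \<omega> (q a) * \<omega> (q b) \<partial>PiM I (\<lambda>_. NS \<sigma>))
          = (if a = b then \<sigma>^4 else 0)"
      using m(2) by (auto simp: power2_eq_square power4_eq_xxxx)
  qed
  have ii: "integrable (PiM I (\<lambda>_. NS \<sigma>)) (\<lambda>\<omega>. \<Sum>a\<in>A. \<Sum>b\<in>A. c a * c b * (\<omega> (p a) * \<omega> (p b) * \<omega> (q a) * \<omega> (q b)))"
  proof (intro Bochner_Integration.integrable_sum integrable_mult_right)
    fix a b assume "a \<in> A" "b \<in> A"
    then show "integrable (PiM I (\<lambda>_. NS \<sigma>)) (\<lambda>\<omega>. \<omega> (p a) * \<omega> (p b) * \<omega> (q a) * \<omega> (q b))"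
      by (rule mi)
  qed
  then show "integrable (PiM I (\<lambda>_. NS \<sigma>)) (\<lambda>\<omega>. (\<Sum>a\<in>A. c a * (\<omega> (p a) * \<omega> (q a)))\<^sup>2)"
    by (simp only: exp)
  have "(\<integral>\<omega>. (\<Sum>a\<in>A. c a * (\<omega> (p a) * \<omega> (q a)))\<^sup>2 \<partial>PiM I (\<lambda>_. NS \<sigma>))
     = (\<integral>\<omega>. (\<Sum>a\<in>A. \<Sum>b\<in>A. c a * c b * (\<omega> (p a) * \<omega> (p b) * \<omega> (q a) * \<omega> (q b))) \<partial>PiM I (\<lambda>_. NS \<sigma>))"
    by (simp only: exp)
  also have "\<dots> = (\<Sum>a\<in>A. \<Sum>b\<in>A. c a * c b * (\<integral>\<omega>. \<omega> (p a) * \<omega> (p b) * \<omega> (q a) * \<omega> (q b) \<partial>PiM I (\<lambda>_. NS \<sigma>)))"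
    using mi by (simp add: integral_sum)
  also have "\<dots> = (\<Sum>a\<in>A. \<Sum>b\<in>A. c a * c b * (if a = b then \<sigma>^4 else 0))"
    using mv by (intro sum.cong refl) auto
  also have "\<dots> = \<sigma>^4 * (\<Sum>a\<in>A. (c a)\<^sup>2)"
    using finA by (simp add: if_distrib sum.delta sum_distrib_left power2_eq_square algebra_simps cong: if_cong)
  finally show "(\<integral>\<omega>. (\<Sum>a\<in>A. c a * (\<omega> (p a) * \<omega> (q a)))\<^sup>2 \<partial>PiM I (\<lambda>_. NS \<sigma>))
         = \<sigma>^4 * (\<Sum>a\<in>A. (c a)\<^sup>2)" .
qed


lemma sum_split_NM: "(\<Sum>j<(N::nat)+M. f j) = (\<Sum>j<N. f j) + (\<Sum>j\<in>{N..<N+M}. (f j :: real))"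
proof -
  have "(\<Sum>j<N. f j) + (\<Sum>j\<in>{N..<N+M}. f j) = (\<Sum>j\<in>{0..<N+M}. f j)"
    unfolding lessThan_atLeast0 by (rule sum.atLeastLessThan_concat) auto
  then show ?thesis by (simp add: lessThan_atLeast0)
qed

lemma sumsq_le_sqsum:
  assumes "finite A" "\<And>j. j \<in> A \<Longrightarrow> f j \<ge> (0::real)"
  shows "(\<Sum>j\<in>A. (f j)\<^sup>2) \<le> (\<Sum>j\<in>A. f j)\<^sup>2"
  using assms
proof (induction A rule: finite_induct)
  case empty then show ?case by simp
next
  case (insert x F)
  have "0 \<le> (\<Sum>j\<in>F. f j)" using insert by (intro sum_nonneg) auto
  moreover have "0 \<le> f x" using insert by auto
  ultimately have "0 \<le> 2 * f x * (\<Sum>j\<in>F. f j)" by simp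
  then show ?case using insert by (simp add: power2_eq_square algebra_simps)
qed

lemma beta_bound:
  fixes a :: "nat \<Rightarrow> real"
  assumes pos: "\<And>j. a j > 0" and le: "(\<Sum>j\<in>{N..<N+M}. a j) \<le> (\<Sum>j<N. a j)"
  shows "(\<Sum>j<N+M. (a j / (\<Sum>j'<N+M. a j') - (if j < N then a j / (\<Sum>j'<N. a j') else 0))\<^sup>2) \<le> 1"
proof (cases "N = 0")
  case True
  then have "(\<Sum>j\<in>{0..<M}. a j) \<le> 0" using le by simp
  moreover have "M > 0 \<Longrightarrow> (\<Sum>j\<in>{0..<M}. a j) > 0" using pos by (intro sum_pos) auto
  ultimately have "M = 0" by (cases "M = 0") auto
  then show ?thesis using True by simp
next
  case False
  define S where "S = (\<Sum>j<N. a j)"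
  define T where "T = (\<Sum>j\<in>{N..<N+M}. a j)"
  have S: "S > 0" unfolding S_def using False pos by (intro sum_pos) auto
  have T: "T \<ge> 0" unfolding T_def using pos by (intro sum_nonneg) (auto intro: less_imp_le)
  have TS: "T \<le> S" using le by (simp add: S_def T_def)
  have tot: "(\<Sum>j'<N+M. a j') = S + T" by (simp add: sum_split_NM S_def T_def)
  have "(\<Sum>j<N+M. (a j / (\<Sum>j'<N+M. a j') - (if j < N then a j / (\<Sum>j'<N. a j') else 0))\<^sup>2)
     = (\<Sum>j<N. (a j * (1 / (S+T) - 1 / S))\<^sup>2) + (\<Sum>j\<in>{N..<N+M}. (a j / (S+T))\<^sup>2)"
    apply (simp only: tot S_def[symmetric])
    apply (subst sum_split_NM)
    by (intro arg_cong2[where f="(+)"] sum.cong) (auto simp: right_diff_distrib)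
  also have "\<dots> = (1 / (S+T) - 1 / S)\<^sup>2 * (\<Sum>j<N. (a j)\<^sup>2) + (\<Sum>j\<in>{N..<N+M}. (a j)\<^sup>2) / (S+T)\<^sup>2"
  proof -
    have "(a j * (1 / (S+T) - 1 / S))\<^sup>2 = (1 / (S+T) - 1 / S)\<^sup>2 * (a j)\<^sup>2" for j
      by (simp add: power_mult_distrib)
    moreover have "(a j / (S+T))\<^sup>2 = (a j)\<^sup>2 / (S+T)\<^sup>2" for j
      by (simp add: power_divide)
    ultimately show ?thesis by (simp add: sum_distrib_left sum_divide_distrib)
  qed
  also have "\<dots> \<le> (1 / (S+T) - 1 / S)\<^sup>2 * S\<^sup>2 + T\<^sup>2 / (S+T)\<^sup>2"
  proof (intro add_mono mult_left_mono divide_right_mono)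
    show "(\<Sum>j<N. (a j)\<^sup>2) \<le> S\<^sup>2" unfolding S_def
      using pos by (intro sumsq_le_sqsum) (auto intro: less_imp_le)
    show "(\<Sum>j\<in>{N..<N+M}. (a j)\<^sup>2) \<le> T\<^sup>2" unfolding T_def
      using pos by (intro sumsq_le_sqsum) (auto intro: less_imp_le)
    show "0 \<le> (1 / (S+T) - 1 / S)\<^sup>2" by simp
    show "0 \<le> (S+T)\<^sup>2" by simp
  qed
  also have "\<dots> = 2 * (T / (S + T))\<^sup>2"
  proof -
    have ST: "S + T \<noteq> 0" using S T by simp
    have e1: "(1 / (S+T) - 1 / S) * S = S / (S+T) - 1" using S by (simp add: left_diff_distrib)
    have e2: "S / (S+T) - 1 = - (T / (S+T))" using ST by (simp add: field_simps)
    have e: "(1 / (S+T) - 1 / S) * S = - (T / (S+T))" using e1 e2 by simp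
    have "(1 / (S+T) - 1 / S)\<^sup>2 * S\<^sup>2 = ((1 / (S+T) - 1 / S) * S)\<^sup>2"
      by (simp add: power_mult_distrib)
    also have "\<dots> = (T / (S+T))\<^sup>2" by (simp only: e) simp
    finally show ?thesis by (simp add: power_divide)
  qed
  also have "\<dots> \<le> 1"
  proof -
    have "T / (S+T) \<le> 1/2" using S T TS by (simp add: field_simps)
    moreover have "0 \<le> T / (S+T)" using S T by simp
    ultimately have "(T / (S+T))\<^sup>2 \<le> (1/2)\<^sup>2" by (intro power_mono) auto
    moreover have q: "(1/2::real)\<^sup>2 = 1/4" by (simp add: power2_eq_square)
    ultimately have "(T / (S+T))\<^sup>2 \<le> 1/4" by (simp only:)
    then show ?thesis by linarith
  qed
  finally show ?thesis .
qed


lemma if_sum_lt: "(\<Sum>j<N+M. (if j < N then g j else 0)) = (\<Sum>j<(N::nat). (g j :: real))"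
  by (simp add: sum_split_NM)

lemma diff_lhs:
  fixes a :: "nat \<Rightarrow> real"
  shows "hidden D p d W U Wc b hprev x (content (N+M) a m) i - hidden D p d W U Wc b hprev x (content N a m) i
   = (\<Sum>z\<in>{..<d}\<times>{..<N+M}. (a (snd z) / (\<Sum>j'<N+M. a j') - (if snd z < N then a (snd z) / (\<Sum>j'<N. a j') else 0))
        * (Wc i (fst z) * m (snd z) (fst z)))"
proof -
  have c: "content (N+M) a m k - content N a m k
     = (\<Sum>j<N+M. (a j / (\<Sum>j'<N+M. a j') - (if j < N then a j / (\<Sum>j'<N. a j') else 0)) * m j k)" for k
  proof -
    have "content N a m k = (\<Sum>j<N+M. (if j < N then a j / (\<Sum>j'<N. a j') * m j k else 0))"
      unfolding content_def by (rule if_sum_lt[symmetric])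
    also have "\<dots> = (\<Sum>j<N+M. (if j < N then a j / (\<Sum>j'<N. a j') else 0) * m j k)"
      by (intro sum.cong) auto
    finally show ?thesis unfolding content_def
      by (simp add: sum_subtractf[symmetric] left_diff_distrib)
  qed
  have "hidden D p d W U Wc b hprev x (content (N+M) a m) i - hidden D p d W U Wc b hprev x (content N a m) i
     = (\<Sum>k<d. Wc i k * (content (N+M) a m k - content N a m k))"
    unfolding hidden_def matvec_def by (simp add: sum_subtractf[symmetric] right_diff_distrib)
  also have "\<dots> = (\<Sum>k<d. \<Sum>j<N+M. (a j / (\<Sum>j'<N+M. a j') - (if j < N then a j / (\<Sum>j'<N. a j') else 0))
        * (Wc i k * m j k))"
    unfolding c by (simp add: sum_distrib_left algebra_simps)
  also have "\<dots> = (\<Sum>z\<in>{..<d}\<times>{..<N+M}. (a (snd z) / (\<Sum>j'<N+M. a j') - (if snd z < N then a (snd z) / (\<Sum>j'<N. a j') else 0))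
        * (Wc i (fst z) * m (snd z) (fst z)))"
    by (subst sum.cartesian_product) (simp add: split_beta)
  finally show ?thesis .
qed

lemma diff_rhs:
  "(hv i + matvec d Wt ht i) - hv i = (\<Sum>k<d. 1 * (Wt i k * ht k))"
  unfolding matvec_def by simp


lemma finite_rvars: "finite (rvars D d K)"
proof -
  have "rvars D d K \<subseteq> (\<lambda>(a,b). RWc a b) ` ({..<D}\<times>{..<d}) \<union> (\<lambda>(a,b). RMv a b) ` ({..<K}\<times>{..<d})
     \<union> (\<lambda>(a,b). RWt a b) ` ({..<D}\<times>{..<d}) \<union> RHt ` {..<d}"
    unfolding rvars_def by auto
  then show ?thesis by (rule finite_subset) auto
qed

lemma gauss_eq: "gauss_space \<sigma> I = PiM I (\<lambda>_. NS \<sigma>)"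
  unfolding gauss_space_def ..

theorem theorem1:
  fixes D d p N M :: nat
    and \<sigma> :: real
    and W :: "nat \<Rightarrow> nat \<Rightarrow> real" and U :: "nat \<Rightarrow> nat \<Rightarrow> real"
    and b hprev x :: "nat \<Rightarrow> real"
    and key :: "nat \<Rightarrow> nat \<Rightarrow> real"
  assumes "\<sigma> > 0"
    and "(\<Sum>j\<in>{N..<N+M}. attn_tilde D hprev key j) \<le> (\<Sum>j<N. attn_tilde D hprev key j)"
  shows
    "(\<integral>\<omega>. sqnorm D (\<lambda>i.
          hidden D p d W U (\<lambda>a k. \<omega> (RWc a k)) b hprev x
            (content (N+M) (attn_tilde D hprev key) (\<lambda>j k. \<omega> (RMv j k))) i
        - hidden D p d W U (\<lambda>a k. \<omega> (RWc a k)) b hprev x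
            (content N (attn_tilde D hprev key) (\<lambda>j k. \<omega> (RMv j k))) i)
      \<partial>gauss_space \<sigma> (rvars D d (N+M)))
   \<le> (\<integral>\<omega>. sqnorm D (\<lambda>i.
          (hidden D p d W U (\<lambda>a k. \<omega> (RWc a k)) b hprev x
             (content N (attn_tilde D hprev key) (\<lambda>j k. \<omega> (RMv j k))) i
           + matvec d (\<lambda>a k. \<omega> (RWt a k)) (\<lambda>k. \<omega> (RHt k)) i)
        - hidden D p d W U (\<lambda>a k. \<omega> (RWc a k)) b hprev x
            (content N (attn_tilde D hprev key) (\<lambda>j k. \<omega> (RMv j k))) i)
      \<partial>gauss_space \<sigma> (rvars D d (N+M)))"
proof -
  note s = assms(1)
  define a where "a = attn_tilde D hprev key"
  define I where "I = rvars D d (N+M)"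
  define \<beta> where "\<beta> j = a j / (\<Sum>j'<N+M. a j') - (if j < N then a j / (\<Sum>j'<N. a j') else 0)" for j
  have finI: "finite I" unfolding I_def by (rule finite_rvars)
  have apos: "\<And>j. a j > 0" unfolding a_def attn_tilde_def by simp
  have bb: "(\<Sum>j<N+M. (\<beta> j)\<^sup>2) \<le> 1"
    unfolding \<beta>_def using beta_bound[of a N M, OF apos] assms(2) by (simp add: a_def)
  define A where "A = {..<d}\<times>{..<N+M}"
  have L: "integrable (PiM I (\<lambda>_. NS \<sigma>)) (\<lambda>\<omega>. (\<Sum>z\<in>A. \<beta> (snd z) * (\<omega> (RWc i (fst z)) * \<omega> (RMv (snd z) (fst z))))\<^sup>2)" (is "?P1 i")
     "(\<integral>\<omega>. (\<Sum>z\<in>A. \<beta> (snd z) * (\<omega> (RWc i (fst z)) * \<omega> (RMv (snd z) (fst z))))\<^sup>2 \<partial>PiM I (\<lambda>_. NS \<sigma>))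
       = \<sigma>^4 * (\<Sum>z\<in>A. (\<beta> (snd z))\<^sup>2)" (is "?P2 i") if "i < D" for i
  proof -
    note Q = quad_form[OF s finI, where p="\<lambda>z. RWc i (fst z)" and q="\<lambda>z. RMv (snd z) (fst z)"]
    show "?P1 i" by (rule Q(1)) (use that in \<open>auto simp: A_def I_def rvars_def inj_on_def\<close>)
    show "?P2 i" by (rule Q(2)) (use that in \<open>auto simp: A_def I_def rvars_def inj_on_def\<close>)
  qed
  have R: "integrable (PiM I (\<lambda>_. NS \<sigma>)) (\<lambda>\<omega>. (\<Sum>k<d. 1 * (\<omega> (RWt i k) * \<omega> (RHt k)))\<^sup>2)" (is "?P1 i")
     "(\<integral>\<omega>. (\<Sum>k<d. 1 * (\<omega> (RWt i k) * \<omega> (RHt k)))\<^sup>2 \<partial>PiM I (\<lambda>_. NS \<sigma>))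
       = \<sigma>^4 * (\<Sum>k<d. 1\<^sup>2)" (is "?P2 i") if "i < D" for i
  proof -
    note Q = quad_form[OF s finI, where p="\<lambda>k. RWt i k" and q="\<lambda>k. RHt k"]
    show "?P1 i" by (rule Q(1)) (use that in \<open>auto simp: I_def rvars_def inj_on_def\<close>)
    show "?P2 i" by (rule Q(2)) (use that in \<open>auto simp: I_def rvars_def inj_on_def\<close>)
  qed
  have "(\<integral>\<omega>. sqnorm D (\<lambda>i.
          hidden D p d W U (\<lambda>a k. \<omega> (RWc a k)) b hprev x
            (content (N+M) (attn_tilde D hprev key) (\<lambda>j k. \<omega> (RMv j k))) i
        - hidden D p d W U (\<lambda>a k. \<omega> (RWc a k)) b hprev x
            (content N (attn_tilde D hprev key) (\<lambda>j k. \<omega> (RMv j k))) i)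
      \<partial>gauss_space \<sigma> (rvars D d (N+M)))
     = (\<integral>\<omega>. (\<Sum>i<D. (\<Sum>z\<in>A. \<beta> (snd z) * (\<omega> (RWc i (fst z)) * \<omega> (RMv (snd z) (fst z))))\<^sup>2) \<partial>PiM I (\<lambda>_. NS \<sigma>))"
    unfolding sqnorm_def diff_lhs gauss_eq I_def A_def \<beta>_def a_def ..
  also have "\<dots> = (\<Sum>i<D. \<sigma>^4 * (\<Sum>z\<in>A. (\<beta> (snd z))\<^sup>2))"
    using L by (simp add: integral_sum)
  also have "\<dots> = real D * \<sigma>^4 * (real d * (\<Sum>j<N+M. (\<beta> j)\<^sup>2))"
  proof -
    have "(\<Sum>k<d. \<Sum>j<N+M. (\<beta> j)\<^sup>2) = (\<Sum>z\<in>A. (\<beta> (snd z))\<^sup>2)"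
      unfolding A_def sum.cartesian_product by (intro sum.cong) auto
    then show ?thesis by simp
  qed
  also have "\<dots> \<le> real D * \<sigma>^4 * (real d * 1)"
    using bb by (intro mult_left_mono) auto
  also have "\<dots> = (\<Sum>i<D. \<sigma>^4 * (\<Sum>k<d. 1\<^sup>2))" by simp
  also have "\<dots> = (\<integral>\<omega>. (\<Sum>i<D. (\<Sum>k<d. 1 * (\<omega> (RWt i k) * \<omega> (RHt k)))\<^sup>2) \<partial>PiM I (\<lambda>_. NS \<sigma>))"
    using R by (simp add: integral_sum)
  also have "\<dots> = (\<integral>\<omega>. sqnorm D (\<lambda>i.
          (hidden D p d W U (\<lambda>a k. \<omega> (RWc a k)) b hprev x
             (content N (attn_tilde D hprev key) (\<lambda>j k. \<omega> (RMv j k))) i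
           + matvec d (\<lambda>a k. \<omega> (RWt a k)) (\<lambda>k. \<omega> (RHt k)) i)
        - hidden D p d W U (\<lambda>a k. \<omega> (RWc a k)) b hprev x
            (content N (attn_tilde D hprev key) (\<lambda>j k. \<omega> (RMv j k))) i)
      \<partial>gauss_space \<sigma> (rvars D d (N+M)))"
    unfolding sqnorm_def diff_rhs gauss_eq I_def ..
  finally show ?thesis .
qed

end
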